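(* Let $G_b$ be a bipartite graph with left vertices $r_1,\dots,r_n$ and right vertices $1,\dots,n$, and let $\Omega$ be the (assumed nonempty) set of perfect matchings of $G_b$, with uniform prior $\Phi\sim\mathrm{Unif}(\Omega)$. For $I\subseteq[n]$ and $\phi\in\Omega$ let $f(I,\phi)=|\Omega|-|\Omega^{(I,\phi)}|$. Then (i) $f$ is adaptive monotone and adaptive submodular with respect to the uniform prior on $\Omega$; and (ii) for every budget $K\in\{1,\dots,n\}$, the adaptive greedy policy $\pi^{g}$ with budget $K$ satisfies $F(\pi^{g})\ge (1-1/e)\max_{\pi}F(\pi)$, where the maximum is over all adaptive policies with budget $K$.
   Context: Each $\phi\in\Omega$ matches each right vertex $v$ to a unique left vertex $\phi(v)$; intervening on item $v\in[n]$ under realization $\phi$ yields the outcome $\phi(v)$ (the matching edge $(\phi(v),v)$). For $I\subseteq[n]$, $\Omega^{(I,\phi)}=\{g\in\Omega: g(v)=\phi(v)\ \forall v\in I\}$. A partial realization is a map $\psi$ from a set $\mathrm{dom}(\psi)\subseteq[n]$ to left vertices such that some $\phi\in\Omega$ agrees with $\psi$ on $\mathrm{dom}(\psi)$ (written $\phi\sim\psi$). For $v\notin\mathrm{dom}(\psi)$, the conditional expected marginal benefit is $\Delta(v\mid\psi)=\mathbb{E}[f(\mathrm{dom}(\psi)\cup\{v\},\Phi)-f(\mathrm{dom}(\psi),\Phi)\mid \Phi\sim\psi]$, where conditioning means $\Phi$ is uniform over $\{\phi\in\Omega:\phi\sim\psi\}$. $f$ is adaptive monotone if $\Delta(v\mid\psi)\ge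 0$ for all partial realizations $\psi$ and $v\notin\mathrm{dom}(\psi)$; adaptive submodular if $\Delta(v\mid\psi)\ge\Delta(v\mid\psi')$ whenever $\psi\subseteq\psi'$ (i.e. $\mathrm{dom}(\psi)\subseteq\mathrm{dom}(\psi')$ and $\psi'$ agrees with $\psi$ on $\mathrm{dom}(\psi)$) are partial realizations and $v\notin\mathrm{dom}(\psi')$. An adaptive policy with budget $K$ selects items $i_1,\dots,i_K$ sequentially, each $i_t$ being a function of the previous items and their observed outcomes $((i_1,\phi(i_1)),\dots,(i_{t-1},\phi(i_{t-1})))$; $I(\pi,\phi)$ is the set selected under realization $\phi$, and $F(\pi)=\mathbb{E}_{\Phi\sim\mathrm{Unif}(\Omega)}[f(I(\pi,\Phi),\Phi)]$. The adaptive greedy policy selects, at each step with current partial realization $\psi$, an item $v\notin\mathrm{dom}(\psi)$ maximizing $\Delta(v\mid\psi)$. *)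

theory Defs
  imports "HOL-Library.FuncSet" Complex_Main
begin

text \<open>Right vertices (items) are 1..n, left vertices r_1..r_n are represented by 1..n.
  E l v means that left vertex r_l is adjacent to right vertex v.
  A realization phi maps each right vertex v to its matched left vertex phi v.\<close>

definition perfect_matchings :: "nat \<Rightarrow> (nat \<Rightarrow> nat \<Rightarrow> bool) \<Rightarrow> (nat \<Rightarrow> nat) set" where
  "perfect_matchings n E =
     {\<phi> \<in> {1..n} \<rightarrow>\<^sub>E {1..n}. bij_betw \<phi> {1..n} {1..n} \<and> (\<forall>v\<in>{1..n}. E (\<phi> v) v)}"

definition Omega_restr :: "(nat \<Rightarrow> nat) set \<Rightarrow> nat set \<Rightarrow> (nat \<Rightarrow> nat) \<Rightarrow> (nat \<Rightarrow> nat) set" where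
  "Omega_restr \<Omega> I \<phi> = {g \<in> \<Omega>. \<forall>v\<in>I. g v = \<phi> v}"

definition f_match :: "(nat \<Rightarrow> nat) set \<Rightarrow> nat set \<Rightarrow> (nat \<Rightarrow> nat) \<Rightarrow> real" where
  "f_match \<Omega> I \<phi> = real (card \<Omega>) - real (card (Omega_restr \<Omega> I \<phi>))"

definition consistent :: "(nat \<Rightarrow> nat) \<Rightarrow> (nat \<rightharpoonup> nat) \<Rightarrow> bool" where
  "consistent \<phi> \<psi> \<longleftrightarrow> (\<forall>v\<in>dom \<psi>. \<psi> v = Some (\<phi> v))"

definition partial_realization :: "nat \<Rightarrow> (nat \<Rightarrow> nat) set \<Rightarrow> (nat \<rightharpoonup> nat) \<Rightarrow> bool" where
  "partial_realization n \<Omega> \<psi> \<longleftrightarrow> dom \<psi> \<subseteq> {1..n} \<and> (\<exists>\<phi>\<in>\<Omega>. consistent \<phi> \<psi>)"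

definition cond_set :: "(nat \<Rightarrow> nat) set \<Rightarrow> (nat \<rightharpoonup> nat) \<Rightarrow> (nat \<Rightarrow> nat) set" where
  "cond_set \<Omega> \<psi> = {\<phi> \<in> \<Omega>. consistent \<phi> \<psi>}"

definition cond_marginal ::
  "(nat \<Rightarrow> nat) set \<Rightarrow> (nat set \<Rightarrow> (nat \<Rightarrow> nat) \<Rightarrow> real) \<Rightarrow> (nat \<rightharpoonup> nat) \<Rightarrow> nat \<Rightarrow> real" where
  "cond_marginal \<Omega> f \<psi> v =
     (\<Sum>\<phi>\<in>cond_set \<Omega> \<psi>. f (insert v (dom \<psi>)) \<phi> - f (dom \<psi>) \<phi>) / real (card (cond_set \<Omega> \<psi>))"

definition adaptive_monotone ::
  "nat \<Rightarrow> (nat \<Rightarrow> nat) set \<Rightarrow> (nat set \<Rightarrow> (nat \<Rightarrow> nat) \<Rightarrow> real) \<Rightarrow> bool" where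
  "adaptive_monotone n \<Omega> f \<longleftrightarrow>
     (\<forall>\<psi> v. partial_realization n \<Omega> \<psi> \<longrightarrow> v \<in> {1..n} - dom \<psi> \<longrightarrow> cond_marginal \<Omega> f \<psi> v \<ge> 0)"

definition adaptive_submodular ::
  "nat \<Rightarrow> (nat \<Rightarrow> nat) set \<Rightarrow> (nat set \<Rightarrow> (nat \<Rightarrow> nat) \<Rightarrow> real) \<Rightarrow> bool" where
  "adaptive_submodular n \<Omega> f \<longleftrightarrow>
     (\<forall>\<psi> \<psi>' v. partial_realization n \<Omega> \<psi> \<longrightarrow> partial_realization n \<Omega> \<psi>' \<longrightarrow> \<psi> \<subseteq>\<^sub>m \<psi>' \<longrightarrow>
        v \<in> {1..n} - dom \<psi>' \<longrightarrow> cond_marginal \<Omega> f \<psi> v \<ge> cond_marginal \<Omega> f \<psi>' v)"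

text \<open>An adaptive policy maps the observed history (list of (item, outcome)) to the next item.\<close>
type_synonym policy = "(nat \<times> nat) list \<Rightarrow> nat"

fun run :: "policy \<Rightarrow> (nat \<Rightarrow> nat) \<Rightarrow> nat \<Rightarrow> (nat \<times> nat) list" where
  "run \<pi> \<phi> 0 = []"
| "run \<pi> \<phi> (Suc t) = run \<pi> \<phi> t @ [(\<pi> (run \<pi> \<phi> t), \<phi> (\<pi> (run \<pi> \<phi> t)))]"

definition selected :: "policy \<Rightarrow> (nat \<Rightarrow> nat) \<Rightarrow> nat \<Rightarrow> nat set" where
  "selected \<pi> \<phi> t = fst ` set (run \<pi> \<phi> t)"

definition valid_policy :: "nat \<Rightarrow> (nat \<Rightarrow> nat) set \<Rightarrow> nat \<Rightarrow> policy \<Rightarrow> bool" where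
  "valid_policy n \<Omega> K \<pi> \<longleftrightarrow>
     (\<forall>\<phi>\<in>\<Omega>. \<forall>t<K. \<pi> (run \<pi> \<phi> t) \<in> {1..n} - selected \<pi> \<phi> t)"

definition policy_value ::
  "(nat \<Rightarrow> nat) set \<Rightarrow> (nat set \<Rightarrow> (nat \<Rightarrow> nat) \<Rightarrow> real) \<Rightarrow> nat \<Rightarrow> policy \<Rightarrow> real" where
  "policy_value \<Omega> f K \<pi> = (\<Sum>\<phi>\<in>\<Omega>. f (selected \<pi> \<phi> K) \<phi>) / real (card \<Omega>)"

text \<open>Adaptive greedy policy (any tie-breaking): at each step, with the current partial
  realization psi = map_of(history), it picks an unselected item maximizing Delta(. | psi).\<close>
definition greedy_policy ::
  "nat \<Rightarrow> (nat \<Rightarrow> nat) set \<Rightarrow> (nat set \<Rightarrow> (nat \<Rightarrow> nat) \<Rightarrow> real) \<Rightarrow> nat \<Rightarrow> policy \<Rightarrow> bool" where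
  "greedy_policy n \<Omega> f K \<pi> \<longleftrightarrow> valid_policy n \<Omega> K \<pi> \<and>
     (\<forall>\<phi>\<in>\<Omega>. \<forall>t<K. \<forall>u\<in>{1..n} - selected \<pi> \<phi> t.
        cond_marginal \<Omega> f (map_of (run \<pi> \<phi> t)) u
          \<le> cond_marginal \<Omega> f (map_of (run \<pi> \<phi> t)) (\<pi> (run \<pi> \<phi> t)))"

end

theory Submission
  imports Defs
begin


definition rs :: "(nat \<Rightarrow> nat) \<Rightarrow> nat set \<Rightarrow> (nat \<rightharpoonup> nat)" where
  "rs \<phi> A = (\<lambda>v. if v \<in> A then Some (\<phi> v) else None)"

lemma dom_rs[simp]: "dom (rs \<phi> A) = A"
  by (auto simp: rs_def dom_def)

lemma consistent_rs: "consistent \<phi>' (rs \<phi> A) \<longleftrightarrow> (\<forall>v\<in>A. \<phi>' v = \<phi> v)"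
  unfolding consistent_def dom_rs by (auto simp: rs_def)

lemma cond_set_rs: "cond_set \<Omega> (rs \<phi> A) = {\<phi>'\<in>\<Omega>. \<forall>v\<in>A. \<phi>' v = \<phi> v}"
  by (simp add: cond_set_def consistent_rs)

lemma selected_0[simp]: "selected \<pi> \<phi> 0 = {}"
  by (simp add: selected_def)

lemma selected_Suc: "selected \<pi> \<phi> (Suc t) = insert (\<pi> (run \<pi> \<phi> t)) (selected \<pi> \<phi> t)"
  by (auto simp: selected_def)

lemma map_of_run: "map_of (run \<pi> \<phi> t) = rs \<phi> (selected \<pi> \<phi> t)"
proof (induction t)
  case 0
  then show ?case by (simp add: rs_def fun_eq_iff)
next
  case (Suc t)
  show ?case unfolding selected_Suc
    using Suc by (auto simp: rs_def map_add_def fun_eq_iff split: option.splits)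
qed

lemma run_det: "(\<forall>v\<in>selected \<pi> \<phi> t. \<phi>' v = \<phi> v) \<Longrightarrow> run \<pi> \<phi>' t = run \<pi> \<phi> t"
proof (induction t)
  case 0
  show ?case by simp
next
  case (Suc t)
  have "run \<pi> \<phi>' t = run \<pi> \<phi> t" using Suc by (auto simp: selected_Suc)
  moreover have "\<phi>' (\<pi> (run \<pi> \<phi> t)) = \<phi> (\<pi> (run \<pi> \<phi> t))" using Suc.prems by (simp add: selected_Suc)
  ultimately show ?case by simp
qed

lemma selected_det: "(\<forall>v\<in>selected \<pi> \<phi> t. \<phi>' v = \<phi> v) \<Longrightarrow> selected \<pi> \<phi>' t = selected \<pi> \<phi> t"
  by (drule run_det) (simp add: selected_def)

lemma valid_sel: "valid_policy n \<Omega> K \<pi> \<Longrightarrow> \<phi>\<in>\<Omega> \<Longrightarrow> t \<le> K \<Longrightarrow> selected \<pi> \<phi> t \<subseteq> {1..n}"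
  by (induction t) (auto simp: valid_policy_def selected_Suc)

lemma pr_rs: "\<phi>\<in>\<Omega> \<Longrightarrow> A \<subseteq> {1..n} \<Longrightarrow> partial_realization n \<Omega> (rs \<phi> A)"
  by (auto simp: partial_realization_def consistent_rs)

lemma rs_le: "A \<subseteq> B \<Longrightarrow> rs \<phi> A \<subseteq>\<^sub>m rs \<phi> B"
  by (auto simp: map_le_def rs_def)

lemma sum_classes:
  fixes X :: "'a \<Rightarrow> real"
  assumes fin: "finite S" and sub: "\<And>x. x\<in>S \<Longrightarrow> C x \<subseteq> S" and rfl: "\<And>x. x\<in>S \<Longrightarrow> x \<in> C x"
    and cl: "\<And>x y. x\<in>S \<Longrightarrow> y \<in> C x \<Longrightarrow> C y = C x"
  shows "(\<Sum>x\<in>S. X x) = (\<Sum>x\<in>S. (\<Sum>y\<in>C x. X y) / card (C x))"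
proof -
  have "(\<Sum>x\<in>S. (\<Sum>y\<in>C x. X y) / card (C x)) = (\<Sum>x\<in>S. \<Sum>y\<in>S. (if y \<in> C x then X y / card (C x) else 0))"
  proof (rule sum.cong[OF refl])
    fix x assume x: "x \<in> S"
    have "C x = S \<inter> C x" using sub x by auto
    then have "(\<Sum>y\<in>C x. X y / card (C x)) = (\<Sum>y\<in>S \<inter> C x. X y / card (C x))" by simp
    also have "\<dots> = (\<Sum>y\<in>S. (if y \<in> C x then X y / card (C x) else 0))"
      by (simp add: sum.inter_restrict fin)
    finally show "(\<Sum>y\<in>C x. X y) / card (C x) = (\<Sum>y\<in>S. (if y \<in> C x then X y / card (C x) else 0))"
      by (simp add: sum_divide_distrib)
  qed
  also have "\<dots> = (\<Sum>y\<in>S. \<Sum>x\<in>S. (if y \<in> C x then X y / card (C x) else 0))"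
    by (rule sum.swap)
  also have "\<dots> = (\<Sum>y\<in>S. X y)"
  proof (rule sum.cong[OF refl])
    fix y assume y: "y\<in>S"
    have "(\<Sum>x\<in>S. (if y \<in> C x then X y / card (C x) else 0)) = (\<Sum>x\<in>S. (if x \<in> C y then X y / card (C y) else 0))"
    proof (rule sum.cong[OF refl])
      fix x assume x: "x \<in> S"
      have "y \<in> C x \<longleftrightarrow> x \<in> C y"
      proof
        assume "y \<in> C x" then have "C y = C x" using cl x by blast
        then show "x \<in> C y" using rfl x by simp
      next
        assume "x \<in> C y" then have "C x = C y" using cl y by blast
        then show "y \<in> C x" using rfl y by simp
      qed
      moreover have "y \<in> C x \<Longrightarrow> C y = C x" using cl x by blast
      ultimately show "(if y \<in> C x then X y / card (C x) else 0) = (if x \<in> C y then X y / card (C y) else 0)"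
        by auto
    qed
    also have "\<dots> = (\<Sum>x\<in>S \<inter> C y. X y / card (C y))" by (rule sum.inter_restrict[OF fin, symmetric])
    also have "S \<inter> C y = C y" using sub y by auto
    also have "finite (C y)" using sub y fin finite_subset by blast
    then have "(\<Sum>x\<in>C y. X y / card (C y)) = X y" using rfl y
      by (cases "C y = {}") auto
    finally show "(\<Sum>x\<in>S. (if y \<in> C x then X y / card (C x) else 0)) = X y" .
  qed
  finally show ?thesis by simp
qed



definition PP :: "(nat \<Rightarrow> nat) set \<Rightarrow> nat \<Rightarrow> real" where
  "PP S v = (\<Sum>\<phi>\<in>S. real (card {g\<in>S. \<phi> v \<noteq> g v}))"

lemma finite_pm: "finite (perfect_matchings n E)"
proof -
  have "perfect_matchings n E \<subseteq> {1..n} \<rightarrow>\<^sub>E {1..n}" by (auto simp: perfect_matchings_def)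
  then show ?thesis using finite_PiE[of "{1..n}" "\<lambda>_. {1..n}"] finite_subset by blast
qed

lemma cm_fmatch:
  assumes fin: "finite \<Omega>" and pr: "partial_realization n \<Omega> \<psi>"
  shows "cond_marginal \<Omega> (f_match \<Omega>) \<psi> v = PP (cond_set \<Omega> \<psi>) v / real (card (cond_set \<Omega> \<psi>))"
proof -
  let ?S = "cond_set \<Omega> \<psi>"
  have finS: "finite ?S" using fin by (simp add: cond_set_def)
  have "f_match \<Omega> (insert v (dom \<psi>)) \<phi> - f_match \<Omega> (dom \<psi>) \<phi> = real (card {g\<in>?S. \<phi> v \<noteq> g v})"
    if \<phi>: "\<phi> \<in> ?S" for \<phi>
  proof -
    have c: "\<And>u. u \<in> dom \<psi> \<Longrightarrow> \<psi> u = Some (\<phi> u)" using \<phi> by (auto simp: cond_set_def consistent_def)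
    have e1: "Omega_restr \<Omega> (dom \<psi>) \<phi> = ?S"
      using c by (auto simp: Omega_restr_def cond_set_def consistent_def; metis domI)
    have e2: "Omega_restr \<Omega> (insert v (dom \<psi>)) \<phi> = {g\<in>?S. g v = \<phi> v}"
      using c by (auto simp: Omega_restr_def cond_set_def consistent_def; metis domI)
    have "card ?S = card {g\<in>?S. g v = \<phi> v} + card {g\<in>?S. \<phi> v \<noteq> g v}"
      using finS by (subst card_Un_disjoint[symmetric]) (auto intro: arg_cong[where f=card])
    then show ?thesis unfolding f_match_def e1 e2 by simp
  qed
  then show ?thesis unfolding cond_marginal_def PP_def by simp
qed

lemma PP_step:
  assumes fin: "finite T" and ne: "T \<noteq> {}" and x: "x \<notin> T"
  shows "PP T v / card T \<le> PP (insert x T) v / card (insert x T)"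
proof -
  define m where "m = card T"
  define d where "d = card {g\<in>T. x v \<noteq> g v}"
  have m0: "m > 0" using fin ne by (simp add: m_def card_gt_0_iff)
  have ins: "PP (insert x T) v = PP T v + 2 * d"
  proof -
    have "PP (insert x T) v = real (card {g\<in>insert x T. x v \<noteq> g v}) + (\<Sum>\<phi>\<in>T. real (card {g\<in>insert x T. \<phi> v \<noteq> g v}))"
      unfolding PP_def using fin x by simp
    also have "card {g\<in>insert x T. x v \<noteq> g v} = d" unfolding d_def
      by (rule arg_cong[where f=card]) auto
    also have "(\<Sum>\<phi>\<in>T. real (card {g\<in>insert x T. \<phi> v \<noteq> g v})) = (\<Sum>\<phi>\<in>T. real (card {g\<in>T. \<phi> v \<noteq> g v}) + (if \<phi> v \<noteq> x v then 1 else 0))"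
    proof (rule sum.cong[OF refl])
      fix \<phi> assume "\<phi> \<in> T"
      show "real (card {g\<in>insert x T. \<phi> v \<noteq> g v}) = real (card {g\<in>T. \<phi> v \<noteq> g v}) + (if \<phi> v \<noteq> x v then 1 else 0)"
      proof (cases "\<phi> v \<noteq> x v")
        case True
        then have "{g\<in>insert x T. \<phi> v \<noteq> g v} = insert x {g\<in>T. \<phi> v \<noteq> g v}" by auto
        then show ?thesis using True fin x by simp
      next
        case False
        then have "{g\<in>insert x T. \<phi> v \<noteq> g v} = {g\<in>T. \<phi> v \<noteq> g v}" by auto
        then show ?thesis using False by simp
      qed
    qed
    also have "\<dots> = PP T v + d"
    proof -
      have "(\<Sum>\<phi>\<in>T. (if \<phi> v \<noteq> x v then 1 else 0::real)) = real (card {\<phi>\<in>T. \<phi> v \<noteq> x v})"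
        using fin by (simp add: sum.If_cases Int_def)
      also have "{\<phi>\<in>T. \<phi> v \<noteq> x v} = {g\<in>T. x v \<noteq> g v}" by auto
      finally show ?thesis unfolding PP_def d_def by (simp add: sum.distrib)
    qed
    finally show ?thesis by simp
  qed
  have bound: "PP T v \<le> 2 * d * m"
  proof -
    have "PP T v \<le> (\<Sum>\<phi>\<in>T. (if \<phi> v \<noteq> x v then real m else 0) + real d)"
      unfolding PP_def
    proof (rule sum_mono)
      fix \<phi> assume "\<phi> \<in> T"
      show "real (card {g\<in>T. \<phi> v \<noteq> g v}) \<le> (if \<phi> v \<noteq> x v then real m else 0) + real d"
      proof (cases "\<phi> v \<noteq> x v")
        case True
        have "card {g\<in>T. \<phi> v \<noteq> g v} \<le> m" unfolding m_def using fin by (intro card_mono) auto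
        then show ?thesis using True by simp
      next
        case False
        then have "{g\<in>T. \<phi> v \<noteq> g v} = {g\<in>T. x v \<noteq> g v}" by auto
        then show ?thesis using False by (simp add: d_def)
      qed
    qed
    also have "\<dots> = real m * card {\<phi>\<in>T. \<phi> v \<noteq> x v} + real m * d"
      using fin by (simp add: sum.distrib sum.If_cases Int_def m_def)
    also have "{\<phi>\<in>T. \<phi> v \<noteq> x v} = {g\<in>T. x v \<noteq> g v}" by auto
    finally show ?thesis by (simp add: d_def algebra_simps)
  qed
  have cT: "card (insert x T) = m + 1" using fin x by (simp add: m_def)
  show ?thesis unfolding ins cT m_def[symmetric]
    using m0 bound by (simp add: divide_simps algebra_simps)
qed

lemma PP_mono_aux:
  assumes "finite A" "finite T" "T \<noteq> {}"
  shows "PP T v / card T \<le> PP (T \<union> A) v / card (T \<union> A)"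
  using assms(1)
proof (induction A rule: finite_induct)
  case empty
  then show ?case by simp
next
  case (insert x A)
  show ?case
  proof (cases "x \<in> T \<union> A")
    case True
    then have "T \<union> insert x A = T \<union> A" by auto
    then show ?thesis using insert by simp
  next
    case False
    have "PP (T \<union> A) v / card (T \<union> A) \<le> PP (insert x (T \<union> A)) v / card (insert x (T \<union> A))"
      using PP_step[of "T \<union> A" x v] False insert assms by auto
    then show ?thesis using insert by simp
  qed
qed

lemma PP_mono:
  assumes "finite S" "T \<subseteq> S" "T \<noteq> {}"
  shows "PP T v / card T \<le> PP S v / card S"
proof -
  have "S = T \<union> (S - T)" using assms by auto
  then show ?thesis using PP_mono_aux[of "S - T" T v] assms finite_subset by (metis finite_Diff)
qed

lemma PP_nonneg: "PP S v \<ge> 0"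
  unfolding PP_def by (simp add: sum_nonneg)

lemma part1:
  assumes fin: "finite \<Omega>"
  shows "adaptive_monotone n \<Omega> (f_match \<Omega>)" "adaptive_submodular n \<Omega> (f_match \<Omega>)"
proof -
  show "adaptive_monotone n \<Omega> (f_match \<Omega>)"
    unfolding adaptive_monotone_def
  proof (intro allI impI)
    fix \<psi> v assume pr: "partial_realization n \<Omega> \<psi>"
    show "0 \<le> cond_marginal \<Omega> (f_match \<Omega>) \<psi> v"
      unfolding cm_fmatch[OF fin pr] by (intro divide_nonneg_nonneg PP_nonneg of_nat_0_le_iff)
  qed
  show "adaptive_submodular n \<Omega> (f_match \<Omega>)"
    unfolding adaptive_submodular_def
  proof (intro allI impI)
    fix \<psi> \<psi>' v
    assume pr: "partial_realization n \<Omega> \<psi>" and pr': "partial_realization n \<Omega> \<psi>'" and le: "\<psi> \<subseteq>\<^sub>m \<psi>'"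
    have sub: "cond_set \<Omega> \<psi>' \<subseteq> cond_set \<Omega> \<psi>"
    proof
      fix \<phi> assume "\<phi> \<in> cond_set \<Omega> \<psi>'"
      then have a: "\<phi> \<in> \<Omega>" and b: "\<forall>u\<in>dom \<psi>'. \<psi>' u = Some (\<phi> u)"
        by (auto simp: cond_set_def consistent_def)
      have "\<forall>u\<in>dom \<psi>. \<psi> u = Some (\<phi> u)"
      proof
        fix u assume u: "u \<in> dom \<psi>"
        then have "\<psi> u = \<psi>' u" using le by (simp add: map_le_def)
        moreover have "u \<in> dom \<psi>'" using u le by (simp add: map_le_def domI) (metis domD domI)
        ultimately show "\<psi> u = Some (\<phi> u)" using b by simp
      qed
      then show "\<phi> \<in> cond_set \<Omega> \<psi>" using a by (simp add: cond_set_def consistent_def)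
    qed
    have ne: "cond_set \<Omega> \<psi>' \<noteq> {}" using pr' by (auto simp: partial_realization_def cond_set_def)
    have "finite (cond_set \<Omega> \<psi>)" using fin by (simp add: cond_set_def)
    then show "cond_marginal \<Omega> (f_match \<Omega>) \<psi>' v \<le> cond_marginal \<Omega> (f_match \<Omega>) \<psi> v"
      unfolding cm_fmatch[OF fin pr] cm_fmatch[OF fin pr'] using PP_mono sub ne by blast
  qed
qed



locale setting =
  fixes n :: nat and \<Omega> :: "(nat \<Rightarrow> nat) set" and f :: "nat set \<Rightarrow> (nat \<Rightarrow> nat) \<Rightarrow> real"
  assumes fin: "finite \<Omega>" and ne: "\<Omega> \<noteq> {}"
    and fmono: "\<And>A B \<phi>. A \<subseteq> B \<Longrightarrow> f A \<phi> \<le> f B \<phi>"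
    and fzero: "\<And>\<phi>. f {} \<phi> = 0"
    and am: "adaptive_monotone n \<Omega> f" and asm: "adaptive_submodular n \<Omega> f"
begin

lemma key_step:
  assumes g: "greedy_policy n \<Omega> f K g" and p: "valid_policy n \<Omega> K p" and i: "i < K" and t: "t < K"
  shows "(\<Sum>\<phi>\<in>\<Omega>. f (selected g \<phi> i \<union> selected p \<phi> (Suc t)) \<phi> - f (selected g \<phi> i \<union> selected p \<phi> t) \<phi>)
     \<le> (\<Sum>\<phi>\<in>\<Omega>. f (selected g \<phi> (Suc i)) \<phi> - f (selected g \<phi> i) \<phi>)"
proof -
  have gv: "valid_policy n \<Omega> K g" using g by (simp add: greedy_policy_def)
  define D where "D \<phi> = selected g \<phi> i" for \<phi>
  define A where "A \<phi> = D \<phi> \<union> selected p \<phi> t" for \<phi>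
  define v where "v \<phi> = p (run p \<phi> t)" for \<phi>
  define C where "C \<phi> = cond_set \<Omega> (rs \<phi> (A \<phi>))" for \<phi>
  define X where "X \<phi> = f (insert (v \<phi>) (A \<phi>)) \<phi> - f (A \<phi>) \<phi>" for \<phi>
  define C' where "C' \<phi> = cond_set \<Omega> (rs \<phi> (D \<phi>))" for \<phi>
  define W where "W \<phi> = f (selected g \<phi> (Suc i)) \<phi> - f (D \<phi>) \<phi>" for \<phi>
  define Z where "Z \<phi> = cond_marginal \<Omega> f (rs \<phi> (D \<phi>)) (g (run g \<phi> i))" for \<phi>
  have Cdef: "C \<phi> = {\<phi>'\<in>\<Omega>. \<forall>u\<in>A \<phi>. \<phi>' u = \<phi> u}" for \<phi> by (simp add: C_def cond_set_rs)
  have C'def: "C' \<phi> = {\<phi>'\<in>\<Omega>. \<forall>u\<in>D \<phi>. \<phi>' u = \<phi> u}" for \<phi> by (simp add: C'_def cond_set_rs)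
  have clsD: "D \<phi>' = D \<phi> \<and> run g \<phi>' i = run g \<phi> i" if "\<forall>u\<in>D \<phi>. \<phi>' u = \<phi> u" for \<phi> \<phi>'
    using that run_det[of g \<phi> i \<phi>'] selected_det[of g \<phi> i \<phi>'] by (simp add: D_def)
  have cls: "A \<phi>' = A \<phi> \<and> v \<phi>' = v \<phi>" if "\<phi>' \<in> C \<phi>" for \<phi> \<phi>'
  proof -
    have a: "\<forall>u\<in>A \<phi>. \<phi>' u = \<phi> u" using that by (simp add: Cdef)
    then have "\<forall>u\<in>D \<phi>. \<phi>' u = \<phi> u" by (simp add: A_def)
    then have "D \<phi>' = D \<phi>" using clsD by blast
    moreover have "run p \<phi>' t = run p \<phi> t" "selected p \<phi>' t = selected p \<phi> t"
      using a run_det[of p \<phi> t \<phi>'] selected_det[of p \<phi> t \<phi>'] by (simp_all add: A_def)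
    ultimately show ?thesis by (simp add: A_def v_def)
  qed
  have Ceq: "C \<phi>' = C \<phi>" if "\<phi>' \<in> C \<phi>" for \<phi> \<phi>'
  proof -
    have a: "\<forall>u\<in>A \<phi>. \<phi>' u = \<phi> u" using that by (simp add: Cdef)
    show ?thesis unfolding Cdef using cls[OF that] a by auto
  qed
  have C'eq: "C' \<phi>' = C' \<phi>" if "\<phi>' \<in> C' \<phi>" for \<phi> \<phi>'
  proof -
    have a: "\<forall>u\<in>D \<phi>. \<phi>' u = \<phi> u" using that by (simp add: C'def)
    show ?thesis unfolding C'def using clsD[OF a] a by auto
  qed
  have "(\<Sum>\<phi>\<in>\<Omega>. f (selected g \<phi> i \<union> selected p \<phi> (Suc t)) \<phi> - f (selected g \<phi> i \<union> selected p \<phi> t) \<phi>)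
      = (\<Sum>\<phi>\<in>\<Omega>. X \<phi>)"
    by (rule sum.cong[OF refl]) (simp add: X_def A_def D_def v_def selected_Suc)
  also have "\<dots> = (\<Sum>\<phi>\<in>\<Omega>. (\<Sum>\<phi>'\<in>C \<phi>. X \<phi>') / card (C \<phi>))"
    apply (rule sum_classes[OF fin])
      apply (auto simp: Cdef)[2]
    apply (erule Ceq)
    done
  also have "\<dots> \<le> (\<Sum>\<phi>\<in>\<Omega>. Z \<phi>)"
  proof (rule sum_mono)
    fix \<phi> assume \<phi>: "\<phi> \<in> \<Omega>"
    have Dsub: "D \<phi> \<subseteq> {1..n}" using valid_sel[OF gv \<phi>] i by (simp add: D_def)
    have Asub: "A \<phi> \<subseteq> {1..n}" using valid_sel[OF gv \<phi>] valid_sel[OF p \<phi>] i t by (simp add: A_def D_def)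
    have gD: "g (run g \<phi> i) \<in> {1..n} - D \<phi>" using gv \<phi> i by (simp add: valid_policy_def D_def)
    have vn: "v \<phi> \<in> {1..n}" using p \<phi> t by (simp add: valid_policy_def v_def)
    have "(\<Sum>\<phi>'\<in>C \<phi>. X \<phi>') / card (C \<phi>) = cond_marginal \<Omega> f (rs \<phi> (A \<phi>)) (v \<phi>)"
      unfolding cond_marginal_def dom_rs C_def[symmetric]
    proof (intro arg_cong2[where f="(/)"] refl sum.cong)
      fix \<phi>' assume "\<phi>' \<in> C \<phi>"
      from cls[OF this] show "X \<phi>' = f (insert (v \<phi>) (A \<phi>)) \<phi>' - f (A \<phi>) \<phi>'"
        unfolding X_def by metis
    qed
    also have "\<dots> \<le> Z \<phi>"
    proof (cases "v \<phi> \<in> A \<phi>")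
      case True
      have "cond_marginal \<Omega> f (rs \<phi> (A \<phi>)) (v \<phi>) = 0"
        unfolding cond_marginal_def using True by (simp add: insert_absorb)
      moreover have "Z \<phi> \<ge> 0" using am pr_rs[OF \<phi> Dsub] gD
        unfolding adaptive_monotone_def Z_def by simp
      ultimately show ?thesis by simp
    next
      case False
      have "cond_marginal \<Omega> f (rs \<phi> (A \<phi>)) (v \<phi>) \<le> cond_marginal \<Omega> f (rs \<phi> (D \<phi>)) (v \<phi>)"
        using asm pr_rs[OF \<phi> Dsub] pr_rs[OF \<phi> Asub] rs_le[of "D \<phi>" "A \<phi>" \<phi>] False vn
        unfolding adaptive_submodular_def by (simp add: A_def)
      also have "\<dots> \<le> Z \<phi>"
        using g \<phi> i False vn unfolding greedy_policy_def Z_def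
        by (simp add: map_of_run A_def D_def)
      finally show ?thesis .
    qed
    finally show "(\<Sum>\<phi>'\<in>C \<phi>. X \<phi>') / card (C \<phi>) \<le> Z \<phi>" .
  qed
  also have "(\<Sum>\<phi>\<in>\<Omega>. Z \<phi>) = (\<Sum>\<phi>\<in>\<Omega>. (\<Sum>\<phi>'\<in>C' \<phi>. W \<phi>') / card (C' \<phi>))"
  proof (rule sum.cong[OF refl])
    fix \<phi> assume "\<phi> \<in> \<Omega>"
    show "Z \<phi> = (\<Sum>\<phi>'\<in>C' \<phi>. W \<phi>') / card (C' \<phi>)"
      unfolding Z_def cond_marginal_def dom_rs C'_def[symmetric]
    proof (intro arg_cong2[where f="(/)"] refl sum.cong)
      fix \<phi>' assume "\<phi>' \<in> C' \<phi>"
      then have "\<forall>u\<in>D \<phi>. \<phi>' u = \<phi> u" by (simp add: C'def)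
      from clsD[OF this] have e: "D \<phi>' = D \<phi>" "run g \<phi>' i = run g \<phi> i" by auto
      have "selected g \<phi>' (Suc i) = insert (g (run g \<phi> i)) (D \<phi>)"
        using e by (simp add: selected_Suc D_def)
      then show "f (insert (g (run g \<phi> i)) (D \<phi>)) \<phi>' - f (D \<phi>) \<phi>' = W \<phi>'"
        unfolding W_def e(1) by simp
    qed
  qed
  also have "\<dots> = (\<Sum>\<phi>\<in>\<Omega>. W \<phi>)"
    apply (rule sum_classes[OF fin, symmetric])
      apply (auto simp: C'def)[2]
    apply (erule C'eq)
    done
  finally show ?thesis by (simp add: W_def D_def)
qed


lemma f_nonneg: "f A \<phi> \<ge> 0"
  using fmono[of "{}" A \<phi>] fzero by simp

lemma main_bound:
  assumes g: "greedy_policy n \<Omega> f K g" and p: "valid_policy n \<Omega> K p" and K: "K \<ge> 1"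
  shows "policy_value \<Omega> f K g \<ge> (1 - 1 / exp 1) * policy_value \<Omega> f K p"
proof -
  define G where "G i = (\<Sum>\<phi>\<in>\<Omega>. f (selected g \<phi> i) \<phi>)" for i
  define Fs where "Fs = (\<Sum>\<phi>\<in>\<Omega>. f (selected p \<phi> K) \<phi>)"
  have rec: "Fs - G i \<le> K * (G (Suc i) - G i)" if i: "i < K" for i
  proof -
    have "(\<Sum>t<K. (\<Sum>\<phi>\<in>\<Omega>. f (selected g \<phi> i \<union> selected p \<phi> (Suc t)) \<phi> - f (selected g \<phi> i \<union> selected p \<phi> t) \<phi>))
       \<le> (\<Sum>t<K. (\<Sum>\<phi>\<in>\<Omega>. f (selected g \<phi> (Suc i)) \<phi> - f (selected g \<phi> i) \<phi>))"
      by (rule sum_mono) (rule key_step[OF g p i], simp)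
    also have "\<dots> = K * (G (Suc i) - G i)" by (simp add: G_def sum_subtractf)
    also have "(\<Sum>t<K. (\<Sum>\<phi>\<in>\<Omega>. f (selected g \<phi> i \<union> selected p \<phi> (Suc t)) \<phi> - f (selected g \<phi> i \<union> selected p \<phi> t) \<phi>))
       = (\<Sum>\<phi>\<in>\<Omega>. f (selected g \<phi> i \<union> selected p \<phi> K) \<phi> - f (selected g \<phi> i) \<phi>)"
      by (subst sum.swap) (simp add: sum_lessThan_telescope[where f="\<lambda>t. f (selected g _ i \<union> selected p _ t) _"])
    finally have *: "(\<Sum>\<phi>\<in>\<Omega>. f (selected g \<phi> i \<union> selected p \<phi> K) \<phi> - f (selected g \<phi> i) \<phi>) \<le> K * (G (Suc i) - G i)" .
    have "Fs - G i \<le> (\<Sum>\<phi>\<in>\<Omega>. f (selected g \<phi> i \<union> selected p \<phi> K) \<phi> - f (selected g \<phi> i) \<phi>)"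
      unfolding Fs_def G_def sum_subtractf[symmetric]
    proof (rule sum_mono)
      fix \<phi> assume "\<phi> \<in> \<Omega>"
      have "f (selected p \<phi> K) \<phi> \<le> f (selected g \<phi> i \<union> selected p \<phi> K) \<phi>"
        by (rule fmono) blast
      then show "f (selected p \<phi> K) \<phi> - f (selected g \<phi> i) \<phi> \<le> f (selected g \<phi> i \<union> selected p \<phi> K) \<phi> - f (selected g \<phi> i) \<phi>"
        by linarith
    qed
    with * show ?thesis by linarith
  qed
  have G0: "G 0 = 0" by (simp add: G_def fzero)
  have Fs0: "Fs \<ge> 0" unfolding Fs_def by (simp add: sum_nonneg f_nonneg)
  have Kp: "real K > 0" using K by simp
  have ind: "Fs - G i \<le> (1 - 1 / K) ^ i * Fs" if "i \<le> K" for i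
    using that
  proof (induction i)
    case 0
    then show ?case by (simp add: G0)
  next
    case (Suc i)
    have iK: "i < K" using Suc.prems by simp
    have IH: "Fs - G i \<le> (1 - 1 / K) ^ i * Fs" using Suc.IH iK by simp
    have r: "Fs - G i \<le> K * (G (Suc i) - G i)" by (rule rec[OF iK])
    have q: "(Fs - G i) / K \<le> G (Suc i) - G i"
      using r Kp by (simp add: pos_divide_le_eq mult.commute)
    have l: "(1 - 1/K) * (Fs - G i) = (Fs - G i) - (Fs - G i) / K"
      by (simp add: left_diff_distrib)
    have h: "0 \<le> 1 - 1 / real K" using K by simp
    have "Fs - G (Suc i) \<le> (1 - 1/K) * (Fs - G i)"
      using q l by linarith
    also have "\<dots> \<le> (1 - 1/K) * ((1 - 1 / K) ^ i * Fs)"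
      by (rule mult_left_mono[OF IH h])
    finally show ?case by simp
  qed
  have e: "(1 - 1 / real K) ^ K \<le> exp (-1)"
    using exp_ge_one_minus_x_over_n_power_n[of 1 K] K by simp
  have ee: "exp (-1) = 1 / exp (1::real)" by (simp add: exp_minus inverse_eq_divide)
  have "Fs - G K \<le> (1 / exp 1) * Fs"
    using ind[of K] mult_right_mono[OF e Fs0] unfolding ee by linarith
  moreover have "(1 - 1 / exp 1) * Fs = Fs - (1 / exp 1) * Fs" by (simp add: left_diff_distrib)
  ultimately have "(1 - 1 / exp 1) * Fs \<le> G K" by linarith
  moreover have "card \<Omega> > 0" using fin ne by (simp add: card_gt_0_iff)
  ultimately show ?thesis unfolding policy_value_def G_def[symmetric] Fs_def[symmetric]
    by (simp add: divide_right_mono)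
qed

end

theorem theorem2:
  fixes n :: nat and E :: "nat \<Rightarrow> nat \<Rightarrow> bool"
  defines "\<Omega> \<equiv> perfect_matchings n E"
  assumes nonempty: "\<Omega> \<noteq> {}"
  shows "adaptive_monotone n \<Omega> (f_match \<Omega>) \<and> adaptive_submodular n \<Omega> (f_match \<Omega>) \<and>
    (\<forall>K\<in>{1..n}. \<forall>\<pi>g \<pi>. greedy_policy n \<Omega> (f_match \<Omega>) K \<pi>g \<longrightarrow> valid_policy n \<Omega> K \<pi> \<longrightarrow>
       policy_value \<Omega> (f_match \<Omega>) K \<pi>g \<ge> (1 - 1 / exp 1) * policy_value \<Omega> (f_match \<Omega>) K \<pi>)"
proof -
  have fin: "finite \<Omega>" unfolding \<Omega>_def by (rule finite_pm)
  have am: "adaptive_monotone n \<Omega> (f_match \<Omega>)" and as: "adaptive_submodular n \<Omega> (f_match \<Omega>)"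
    using part1[OF fin] by auto
  have fm: "f_match \<Omega> A \<phi> \<le> f_match \<Omega> B \<phi>" if "A \<subseteq> B" for A B \<phi>
  proof -
    have "Omega_restr \<Omega> B \<phi> \<subseteq> Omega_restr \<Omega> A \<phi>" using that by (auto simp: Omega_restr_def)
    moreover have "finite (Omega_restr \<Omega> A \<phi>)" using fin by (simp add: Omega_restr_def)
    ultimately have "card (Omega_restr \<Omega> B \<phi>) \<le> card (Omega_restr \<Omega> A \<phi>)" by (rule card_mono[rotated])
    then show ?thesis by (simp add: f_match_def)
  qed
  have fz: "f_match \<Omega> {} \<phi> = 0" for \<phi> by (simp add: f_match_def Omega_restr_def)
  interpret S: setting n \<Omega> "f_match \<Omega>"
  proof
    show "finite \<Omega>" by (rule fin)
    show "\<Omega> \<noteq> {}" by (rule nonempty)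
    show "\<And>A B \<phi>. A \<subseteq> B \<Longrightarrow> f_match \<Omega> A \<phi> \<le> f_match \<Omega> B \<phi>" by (rule fm)
    show "\<And>\<phi>. f_match \<Omega> {} \<phi> = 0" by (rule fz)
    show "adaptive_monotone n \<Omega> (f_match \<Omega>)" by (rule am)
    show "adaptive_submodular n \<Omega> (f_match \<Omega>)" by (rule as)
  qed
  have "\<forall>K\<in>{1..n}. \<forall>\<pi>g \<pi>. greedy_policy n \<Omega> (f_match \<Omega>) K \<pi>g \<longrightarrow> valid_policy n \<Omega> K \<pi> \<longrightarrow>
       policy_value \<Omega> (f_match \<Omega>) K \<pi>g \<ge> (1 - 1 / exp 1) * policy_value \<Omega> (f_match \<Omega>) K \<pi>"
  proof (intro ballI allI impI)
    fix K \<pi>g \<pi> assume "K \<in> {1..n}" "greedy_policy n \<Omega> (f_match \<Omega>) K \<pi>g" "valid_policy n \<Omega> K \<pi>"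
    then show "policy_value \<Omega> (f_match \<Omega>) K \<pi>g \<ge> (1 - 1 / exp 1) * policy_value \<Omega> (f_match \<Omega>) K \<pi>"
      using S.main_bound[of K \<pi>g \<pi>] by simp
  qed
  then show ?thesis using am as by blast
qed

end
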